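(* Fix $\beta>2$ and let $G_\beta,H_\beta,K_\beta,g_\beta$ and $F_\beta(\mathbf{x},r)$ be as in the context. For every $r>0$, the equation $$H_\beta(y-3r/2)+H_\beta(y)+K_\beta(y)=1,\qquad y\in(-\infty,g_\beta],$$ has a unique solution $y_2^\beta(r)$. Furthermore, the point $\big(H_\beta(y_2^\beta(r)),K_\beta(y_2^\beta(r))\big)$ is a local minimum of $F_\beta(\cdot,r)$.
   Context: $\Xi=\{(x_1,x_2): x_1,x_2\ge0,\ x_1+x_2\le1\}$, $x_0=1-x_1-x_2$, $\mathbf{v}_k=(\cos(2\pi k/3),\sin(2\pi k/3))$, and $F_\beta(\mathbf{x},r)=-\frac12|\sum_{k=0}^2x_k\mathbf{v}_k|^2+\frac1\beta\sum_{k=0}^2x_k\log(3x_k)+r\,x_0-\frac r2(x_1+x_2)$ (potential with external field of magnitude $r$, angle $\pi$). $G_\beta(x)=\frac1\beta\log x-\frac32x$ on $(0,\infty)$, $l_\beta=2/(3\beta)$, $g_\beta=G_\beta(l_\beta)$; for $y<g_\beta$, $H_\beta(y)<l_\beta<K_\beta(y)$ are the two solutions of $G_\beta(x)=y$, and $H_\beta(g_\beta)=K_\beta(g_\beta)=l_\beta$. *)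

theory Defs
  imports "HOL-Analysis.Analysis"
begin

definition Xi :: "(real \<times> real) set" where
  "Xi = {(x1, x2). x1 \<ge> 0 \<and> x2 \<ge> 0 \<and> x1 + x2 \<le> 1}"

definition vk :: "nat \<Rightarrow> real \<times> real" where
  "vk k = (cos (2 * pi * real k / 3), sin (2 * pi * real k / 3))"

text \<open>Potential with external field of magnitude r and angle pi. Convention 0 log 0 = 0
  (automatic since ln 0 = 0 in Isabelle).\<close>
definition F :: "real \<Rightarrow> real \<times> real \<Rightarrow> real \<Rightarrow> real" where
  "F \<beta> x r = (let x1 = fst x; x2 = snd x; x0 = 1 - x1 - x2;
                  xs = (\<lambda>k::nat. if k = 0 then x0 else if k = 1 then x1 else x2) in
     - (1/2) * (norm (\<Sum>k<3. xs k *\<^sub>R vk k))\<^sup>2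
     + (1/\<beta>) * (\<Sum>k<3. xs k * ln (3 * xs k))
     + r * x0 - (r/2) * (x1 + x2))"

definition G :: "real \<Rightarrow> real \<Rightarrow> real" where
  "G \<beta> x = (1/\<beta>) * ln x - (3/2) * x"

definition l :: "real \<Rightarrow> real" where
  "l \<beta> = 2 / (3 * \<beta>)"

definition g :: "real \<Rightarrow> real" where
  "g \<beta> = G \<beta> (l \<beta>)"

text \<open>For y \<le> g \<beta>: the smaller / larger solution of G \<beta> x = y.\<close>
definition H :: "real \<Rightarrow> real \<Rightarrow> real" where
  "H \<beta> y = (THE x. 0 < x \<and> x \<le> l \<beta> \<and> G \<beta> x = y)"

definition K :: "real \<Rightarrow> real \<Rightarrow> real" where
  "K \<beta> y = (THE x. l \<beta> \<le> x \<and> G \<beta> x = y)"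

definition is_local_min_on :: "(real \<times> real \<Rightarrow> real) \<Rightarrow> (real \<times> real) set \<Rightarrow> real \<times> real \<Rightarrow> bool" where
  "is_local_min_on f S p \<longleftrightarrow> p \<in> S \<and> (\<exists>e>0. \<forall>z\<in>S. dist z p < e \<longrightarrow> f p \<le> f z)"

end

theory Submission
  imports Defs
begin

lemma L_dec:
  fixes a b :: real assumes "1 \<le> a" "a < b"
  shows "ln b - b < ln a - a"
proof -
  have "(\<lambda>x. ln x - x) a > (\<lambda>x. ln x - x) b"
  proof (rule DERIV_neg_imp_decreasing_open[OF assms(2)])
    fix x :: real assume x: "a < x" "x < b"
    have "((\<lambda>x. ln x - x) has_real_derivative (1/x - 1)) (at x)"
      using x assms by (auto intro!: derivative_eq_intros)
    moreover have "1/x - 1 < 0" using x assms by (simp add: field_simps)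
    ultimately show "\<exists>y. ((\<lambda>x. ln x - x) has_real_derivative y) (at x) \<and> y < 0" by blast
  next
    show "continuous_on {a..b} (\<lambda>x. ln x - x)" using assms by (auto intro!: continuous_intros)
  qed
  thus ?thesis by simp
qed

definition dG :: "real \<Rightarrow> real \<Rightarrow> real" where
  "dG \<beta> x = 1/(\<beta>*x) - 3/2"

lemma G_deriv: "\<beta> > 0 \<Longrightarrow> 0 < x \<Longrightarrow> (G \<beta> has_real_derivative dG \<beta> x) (at x)"
  unfolding G_def dG_def
  by (auto intro!: derivative_eq_intros simp: field_simps)

lemma G_isCont: "\<beta> > 0 \<Longrightarrow> 0 < x \<Longrightarrow> isCont (G \<beta>) x"
  using G_deriv DERIV_isCont by blast

lemma G_cont_on: "\<beta> > 0 \<Longrightarrow> 0 < a \<Longrightarrow> continuous_on {a..b} (G \<beta>)"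
  by (intro continuous_at_imp_continuous_on ballI G_isCont) auto

lemma dG_pos: "\<beta> > 0 \<Longrightarrow> 0 < x \<Longrightarrow> x < l \<beta> \<Longrightarrow> dG \<beta> x > 0"
  unfolding dG_def l_def by (simp add: field_simps)

lemma dG_neg: "\<beta> > 0 \<Longrightarrow> l \<beta> < x \<Longrightarrow> dG \<beta> x < 0"
proof -
  assume a: "\<beta> > 0" "l \<beta> < x"
  hence "x > 0" unfolding l_def by (smt (verit) divide_pos_pos)
  thus ?thesis using a unfolding dG_def l_def by (simp add: field_simps)
qed

lemma l_pos: "\<beta> > 0 \<Longrightarrow> l \<beta> > 0" unfolding l_def by simp

lemma G_mono: assumes "\<beta> > 0" "0 < a" "a < b" "b \<le> l \<beta>" shows "G \<beta> a < G \<beta> b"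
proof (rule DERIV_pos_imp_increasing_open[OF assms(3)])
  fix x assume "a < x" "x < b"
  thus "\<exists>y. (G \<beta> has_real_derivative y) (at x) \<and> y > 0"
    using assms G_deriv dG_pos by (metis less_le_trans order.strict_trans)
qed (use assms G_cont_on in auto)

lemma G_anti: assumes "\<beta> > 0" "l \<beta> \<le> a" "a < b" shows "G \<beta> b < G \<beta> a"
proof (rule DERIV_neg_imp_decreasing_open[OF assms(3)])
  fix x assume "a < x" "x < b"
  thus "\<exists>y. (G \<beta> has_real_derivative y) (at x) \<and> y < 0"
    using assms G_deriv dG_neg l_pos by (metis le_less_trans order.strict_trans)
next
  have "0 < a" using assms l_pos[OF assms(1)] by linarith
  thus "continuous_on {a..b} (G \<beta>)" using G_cont_on assms(1) by blast
qed

lemma G_le_g: assumes "\<beta> > 0" "0 < x" shows "G \<beta> x \<le> g \<beta>"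
  using G_mono[OF assms(1,2), of "l \<beta>"] G_anti[OF assms(1), of "l \<beta>" x] unfolding g_def
  by (cases "x < l \<beta>"; cases "x = l \<beta>") auto

lemma H_ex: assumes "\<beta> > 0" "y \<le> g \<beta>" shows "\<exists>x. 0 < x \<and> x \<le> l \<beta> \<and> G \<beta> x = y"
proof -
  define a where "a = min (l \<beta>) (exp (\<beta>*y))"
  have a0: "a > 0" "a \<le> l \<beta>" using l_pos[OF assms(1)] by (auto simp: a_def)
  have "G \<beta> a \<le> y"
  proof (cases "l \<beta> \<le> exp (\<beta>*y)")
    case True
    hence "ln (l \<beta>) \<le> \<beta>*y" using l_pos[OF assms(1)] by (metis ln_exp ln_le_cancel_iff exp_gt_zero)
    hence "(1/\<beta>) * ln (l \<beta>) \<le> y" using assms(1) by (simp add: field_simps)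
    moreover have "a = l \<beta>" using True by (simp add: a_def)
    ultimately show ?thesis unfolding G_def using l_pos[OF assms(1)] by simp
  next
    case False
    hence "a = exp (\<beta>*y)" by (simp add: a_def)
    thus ?thesis unfolding G_def using assms(1) by simp
  qed
  moreover have "y \<le> G \<beta> (l \<beta>)" using assms(2) by (simp add: g_def)
  ultimately obtain x where "a \<le> x" "x \<le> l \<beta>" "G \<beta> x = y"
    using IVT'[of "G \<beta>" a y "l \<beta>"] a0 G_cont_on assms(1) by blast
  thus ?thesis using a0 by (intro exI[of _ x]) auto
qed

lemma K_ex: assumes "\<beta> > 2" "y \<le> g \<beta>" shows "\<exists>x. l \<beta> \<le> x \<and> G \<beta> x = y"
proof -
  have b0: "\<beta> > 0" using assms by simp
  define b where "b = max (l \<beta>) (\<bar>y\<bar>+1)"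
  have b: "b > 0" "l \<beta> \<le> b" "\<bar>y\<bar> + 1 \<le> b" by (auto simp: b_def)
  have "ln b \<le> b - 1" using b ln_le_minus_one by blast
  hence "(1/\<beta>) * ln b \<le> (1/\<beta>) * (b - 1)" using b0 by (simp add: field_simps)
  also have "\<dots> < b/2"
  proof -
    have "(1/\<beta>) * (b - 1) \<le> (1/2) * (b-1)" using assms b by (intro mult_right_mono) auto
    thus ?thesis by (simp add: field_simps)
  qed
  finally have "G \<beta> b \<le> y" unfolding G_def using b by linarith
  moreover have "y \<le> G \<beta> (l \<beta>)" using assms(2) by (simp add: g_def)
  ultimately obtain x where "l \<beta> \<le> x" "x \<le> b" "G \<beta> x = y"
    using IVT2'[of "G \<beta>" b y "l \<beta>"] b G_cont_on[OF b0] l_pos[OF b0] by blast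
  thus ?thesis by auto
qed

lemma H_uniq: assumes "\<beta> > 0" "0 < x" "x \<le> l \<beta>" "0 < x'" "x' \<le> l \<beta>" "G \<beta> x = G \<beta> x'"
  shows "x = x'"
  using G_mono[OF assms(1,2) _ assms(5)] G_mono[OF assms(1,4) _ assms(3)] assms(6)
  by (metis less_irrefl linorder_neqE_linordered_idom)

lemma K_uniq: assumes "\<beta> > 0" "l \<beta> \<le> x" "l \<beta> \<le> x'" "G \<beta> x = G \<beta> x'"
  shows "x = x'"
  using G_anti[OF assms(1,2)] G_anti[OF assms(1,3)] assms(4)
  by (metis less_irrefl linorder_neqE_linordered_idom)

lemma H_eq: assumes "\<beta> > 0" "0 < x" "x \<le> l \<beta>" shows "H \<beta> (G \<beta> x) = x"
  unfolding H_def using assms H_uniq[OF assms(1)] by (intro the_equality) auto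

lemma K_eq: assumes "\<beta> > 0" "l \<beta> \<le> x" shows "K \<beta> (G \<beta> x) = x"
  unfolding K_def using assms K_uniq[OF assms(1)] by (intro the_equality) auto

lemma H_spec: assumes "\<beta> > 0" "y \<le> g \<beta>"
  shows "0 < H \<beta> y \<and> H \<beta> y \<le> l \<beta> \<and> G \<beta> (H \<beta> y) = y"
  using H_ex[OF assms] H_eq[OF assms(1)] by metis

lemma K_spec: assumes "\<beta> > 2" "y \<le> g \<beta>"
  shows "l \<beta> \<le> K \<beta> y \<and> G \<beta> (K \<beta> y) = y"
  using K_ex[OF assms] K_eq[of \<beta>] assms by (metis dual_order.strict_trans zero_less_numeral)

lemma H_lt: assumes "\<beta> > 0" "y < g \<beta>" shows "H \<beta> y < l \<beta>"
  using H_spec[OF assms(1)] assms unfolding g_def by (metis less_le order.strict_implies_order)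

lemma K_gt: assumes "\<beta> > 2" "y < g \<beta>" shows "l \<beta> < K \<beta> y"
  using K_spec[OF assms(1)] assms unfolding g_def by (metis less_le order.strict_implies_order)


definition psi :: "real \<Rightarrow> real \<Rightarrow> real" where
  "psi \<beta> x = -(3/4)*x^2 + (1/\<beta>) * (x * ln (3*x))"

lemma vk_vals: "vk 0 = (1, 0)" "vk 1 = (-1/2, sqrt 3/2)" "vk 2 = (-1/2, -(sqrt 3/2))"
proof -
  show "vk 0 = (1,0)" by (simp add: vk_def)
  show "vk 1 = (-1/2, sqrt 3/2)" by (simp add: vk_def cos_120 sin_120)
  have e: "2 * pi * real 2 / 3 = pi/3 + pi" by simp
  show "vk 2 = (-1/2, -(sqrt 3/2))"
    unfolding vk_def e sin_periodic_pi cos_periodic_pi by (simp add: sin_60 cos_60)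
qed

lemma F_formula:
  "F \<beta> (u, v) r = 1/4 + psi \<beta> (1-u-v) + psi \<beta> u + psi \<beta> v + r*(1-u-v) - (r/2)*(u+v)"
proof -
  have s3: "\<And>f::nat\<Rightarrow>'a::comm_monoid_add. (\<Sum>k<3. f k) = f 0 + f 1 + f 2"
    by (simp add: numeral_3_eq_3 numeral_2_eq_2 add.commute add.left_commute)
  have n: "(norm (a::real, b::real))\<^sup>2 = a^2 + b^2" for a b
    by (simp add: norm_Pair)
  have sq3: "(sqrt 3)^2 = (3::real)" by simp
  have e3: "(u * sqrt 3 / 2 - v * sqrt 3 / 2)^2 = 3*(u-v)^2/4"
  proof -
    have "(u * sqrt 3 / 2 - v * sqrt 3 / 2) = (u-v) * sqrt 3/2" by (simp add: algebra_simps)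
    hence "(u * sqrt 3 / 2 - v * sqrt 3 / 2)^2 = ((u-v) * sqrt 3/2)^2" by (simp only:)
    also have "\<dots> = (u-v)^2 * (sqrt 3)^2 / 4" by (simp only: power_mult_distrib power_divide) simp
    finally show ?thesis by simp

  qed
  show ?thesis
    unfolding F_def Let_def s3 vk_vals
    apply (simp add: n psi_def power2_eq_square algebra_simps sq3 flip: power2_eq_square)
    apply (simp only: e3)
    apply (simp add: power2_eq_square field_simps)
    done
qed
lemma psi_taylor:
  assumes b: "\<beta> > 0" and x: "x > 0" and e: "\<epsilon> > 0"
  shows "\<exists>\<delta>>0. \<forall>d. \<bar>d\<bar> < \<delta> \<longrightarrow>
     psi \<beta> x + (G \<beta> x + (1/\<beta>)*(ln 3 + 1)) * d + (dG \<beta> x - \<epsilon>)/2 * d^2 \<le> psi \<beta> (x+d)"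
proof -
  define \<delta> where "\<delta> = min (x/2) (\<epsilon>*\<beta>*x^2/2)"
  have dpos: "\<delta> > 0" using b x e by (simp add: \<delta>_def)
  define p1 where "p1 t = -(3/2)*t + (1/\<beta>)*(ln(3*t)+1)" for t
  define diff where "diff m = (if m = 0 then psi \<beta> else if m = 1 then p1 else dG \<beta>)" for m :: nat
  have D1: "(psi \<beta> has_real_derivative p1 t) (at t)" if "t > 0" for t
    unfolding psi_def p1_def using that b
    by (auto intro!: derivative_eq_intros simp: field_simps)
  have D2: "(p1 has_real_derivative dG \<beta> t) (at t)" if "t > 0" for t
    unfolding dG_def p1_def using that b
    by (auto intro!: derivative_eq_intros simp: field_simps)
  have p1x: "p1 x = G \<beta> x + (1/\<beta>)*(ln 3 + 1)"
    unfolding p1_def G_def using x by (simp add: ln_mult algebra_simps)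
  show ?thesis
  proof (intro exI[of _ \<delta>] conjI allI impI dpos)
    fix d :: real assume d: "\<bar>d\<bar> < \<delta>"
    show "psi \<beta> x + (G \<beta> x + (1/\<beta>)*(ln 3 + 1)) * d + (dG \<beta> x - \<epsilon>)/2 * d^2 \<le> psi \<beta> (x+d)"
    proof (cases "d = 0")
      case True thus ?thesis by simp
    next
      case False
      have dx: "\<bar>d\<bar> < x/2" using d by (simp add: \<delta>_def)
      have dx2: "\<delta> \<le> x/2" by (simp add: \<delta>_def)
      obtain t where t: "(if x + d < x then x + d < t \<and> t < x else x < t \<and> t < x + d)"
        and eq: "psi \<beta> (x+d) = (\<Sum>m<2. (diff m x / fact m) * (x + d - x)^m) + (diff 2 t / fact 2) * (x + d - x)^2"
      proof (rule exE[OF Taylor[of 2 diff "psi \<beta>" "x/2" "2*x" x "x+d"]])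
        show "\<forall>m t. m < 2 \<and> x/2 \<le> t \<and> t \<le> 2*x \<longrightarrow> (diff m has_real_derivative diff (Suc m) t) (at t)"
        proof (intro allI impI)
          fix m :: nat and t :: real assume mt: "m < 2 \<and> x/2 \<le> t \<and> t \<le> 2*x"
          hence "t > 0" using x by linarith
          moreover have "m = 0 \<or> m = 1" using mt by auto
          ultimately show "(diff m has_real_derivative diff (Suc m) t) (at t)"
            using D1 D2 by (auto simp: diff_def)
        qed
      qed (use x dx False in \<open>auto simp: diff_def\<close>)
      have tb: "\<bar>t - x\<bar> < \<delta>" using t d by (auto split: if_splits)
      have tpos: "t > 0" using tb x dx2 by arith
      have dGt: "dG \<beta> x - \<epsilon> \<le> dG \<beta> t"
      proof (cases "t \<le> x")
        case True
        have "1/(\<beta>*x) \<le> 1/(\<beta>*t)" using True tpos b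
          by (intro divide_left_mono mult_left_mono mult_pos_pos) auto
        thus ?thesis using e by (simp add: dG_def)
      next
        case False
        have "1/(\<beta>*x) - 1/(\<beta>*t) = (t - x)/(\<beta>*x*t)" using tpos x b by (simp add: field_simps)
        also have "\<dots> \<le> (t - x)/(\<beta>*x*x)" using False tpos x b
          by (intro divide_left_mono mult_left_mono mult_pos_pos) auto
        also have "\<dots> < \<epsilon>"
        proof -
          have "t - x < \<epsilon>*\<beta>*x^2/2" using tb False by (simp add: \<delta>_def)
          moreover have "0 < \<epsilon>*\<beta>*x^2" using e b x by simp
          moreover have "\<epsilon>*\<beta>*x^2 = \<epsilon> * (\<beta>*x*x)" by (simp add: power2_eq_square algebra_simps)
          ultimately have "t - x < \<epsilon> * (\<beta>*x*x)" by linarith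
          thus ?thesis using b x by (simp add: divide_less_eq)
        qed
        finally show ?thesis by (simp add: dG_def)
      qed
      have "(dG \<beta> x - \<epsilon>)/2 * d^2 \<le> dG \<beta> t / 2 * d^2"
        using dGt by (intro mult_right_mono) auto
      moreover have "psi \<beta> (x+d) = psi \<beta> x + p1 x * d + dG \<beta> t / 2 * d^2"
        using eq by (simp add: diff_def numeral_2_eq_2)
      ultimately show ?thesis using p1x by simp
    qed
  qed
qed


lemma quad_nonneg:
  fixes b0 b1 b2 d1 d2 :: real
  assumes "b0 > 0" "b1 > 0" "b0*b1 + b0*b2 + b1*b2 \<ge> 0"
  shows "b0*(d1+d2)^2 + b1*d1^2 + b2*d2^2 \<ge> 0"
proof -
  have "(b0+b1) * (b0*(d1+d2)^2 + b1*d1^2 + b2*d2^2) = ((b0+b1)*d1 + b0*d2)^2 + (b0*b1 + b0*b2 + b1*b2)*d2^2"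
    by (simp add: power2_eq_square algebra_simps)
  also have "\<dots> \<ge> 0" using assms by simp
  finally show ?thesis using assms by (simp add: zero_le_mult_iff)
qed

lemma local_min_generic:
  assumes b: "\<beta> > 0" and x: "x0 > 0" "x1 > 0" "x2 > 0" and sum: "x0 + x1 + x2 = 1"
    and crit1: "G \<beta> x0 + r = G \<beta> x1 - r/2" and crit2: "G \<beta> x1 = G \<beta> x2"
    and a0: "dG \<beta> x0 > 0" and a1: "dG \<beta> x1 > 0"
    and det: "dG \<beta> x0 * dG \<beta> x1 + dG \<beta> x0 * dG \<beta> x2 + dG \<beta> x1 * dG \<beta> x2 > 0"
  shows "is_local_min_on (\<lambda>x. F \<beta> x r) Xi (x1, x2)"
proof -
  define A0 A1 A2 where "A0 = dG \<beta> x0" "A1 = dG \<beta> x1" "A2 = dG \<beta> x2"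
  define D where "D = A0*A1 + A0*A2 + A1*A2"
  define s where "s = \<bar>A0\<bar> + \<bar>A1\<bar> + \<bar>A2\<bar>"
  define \<epsilon> where "\<epsilon> = min (min (A0/2) (A1/2)) (D/(2*(s+1)))"
  have Dp: "D > 0" using det by (simp add: D_def A0_A1_A2_def)
  have sp: "s \<ge> 0" by (simp add: s_def)
  have ep: "\<epsilon> > 0" using a0 a1 Dp sp by (simp add: \<epsilon>_def A0_A1_A2_def)
  have e1: "\<epsilon> \<le> A0/2" "\<epsilon> \<le> A1/2" "\<epsilon> \<le> D/(2*(s+1))" unfolding \<epsilon>_def by linarith+
  define B0 B1 B2 where "B0 = A0 - \<epsilon>" "B1 = A1 - \<epsilon>" "B2 = A2 - \<epsilon>"
  have B0: "B0 > 0" "B1 > 0" using e1 ep a0 a1 by (simp_all add: B0_B1_B2_def A0_A1_A2_def)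
  have Bdet: "B0*B1 + B0*B2 + B1*B2 \<ge> 0"
  proof -
    have "B0*B1 + B0*B2 + B1*B2 = D - 2*(\<epsilon>*(A0+A1+A2)) + 3*\<epsilon>^2"
      by (simp add: B0_B1_B2_def D_def power2_eq_square algebra_simps)
    moreover have "\<epsilon>*(A0+A1+A2) \<le> \<epsilon> * s" using ep by (intro mult_left_mono) (auto simp: s_def)
    moreover have "2*(\<epsilon> * s) + 2*\<epsilon> \<le> D" using e1(3) sp by (simp add: field_simps)
    moreover have "\<epsilon>^2 \<ge> 0" by simp
    ultimately show ?thesis using ep by linarith
  qed
  obtain \<delta>0 where d0: "\<delta>0 > 0" "\<forall>d. \<bar>d\<bar> < \<delta>0 \<longrightarrow>
     psi \<beta> x0 + (G \<beta> x0 + (1/\<beta>)*(ln 3 + 1)) * d + (dG \<beta> x0 - \<epsilon>)/2 * d^2 \<le> psi \<beta> (x0+d)"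
    using psi_taylor[OF b x(1) ep] by blast
  obtain \<delta>1 where d1: "\<delta>1 > 0" "\<forall>d. \<bar>d\<bar> < \<delta>1 \<longrightarrow>
     psi \<beta> x1 + (G \<beta> x1 + (1/\<beta>)*(ln 3 + 1)) * d + (dG \<beta> x1 - \<epsilon>)/2 * d^2 \<le> psi \<beta> (x1+d)"
    using psi_taylor[OF b x(2) ep] by blast
  obtain \<delta>2 where d2: "\<delta>2 > 0" "\<forall>d. \<bar>d\<bar> < \<delta>2 \<longrightarrow>
     psi \<beta> x2 + (G \<beta> x2 + (1/\<beta>)*(ln 3 + 1)) * d + (dG \<beta> x2 - \<epsilon>)/2 * d^2 \<le> psi \<beta> (x2+d)"
    using psi_taylor[OF b x(3) ep] by blast
  define e where "e = min \<delta>0 (min \<delta>1 \<delta>2) / 2"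
  have epos: "e > 0" using d0 d1 d2 by (simp add: e_def)
  show ?thesis unfolding is_local_min_on_def
  proof (intro conjI exI[of _ e] epos ballI impI)
    show "(x1, x2) \<in> Xi" using x sum by (simp add: Xi_def)
  next
    fix z assume "z \<in> Xi" and dz: "dist z (x1, x2) < e"
    obtain u v where z: "z = (u, v)" by fastforce
    define e1 e2 where "e1 = u - x1" "e2 = v - x2"
    define e0 where "e0 = -(e1+e2)"
    have dd: "dist z (x1,x2) = sqrt (e1^2 + e2^2)" by (simp add: z dist_Pair_Pair dist_real_def e1_e2_def)
    have "\<bar>e1\<bar> = sqrt (e1^2)" by simp
    also have "\<dots> \<le> sqrt (e1^2 + e2^2)" by (intro real_sqrt_le_mono) simp
    finally have ae1: "\<bar>e1\<bar> < e" using dz dd by linarith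
    have "\<bar>e2\<bar> = sqrt (e2^2)" by simp
    also have "\<dots> \<le> sqrt (e1^2 + e2^2)" by (intro real_sqrt_le_mono) simp
    finally have ae2: "\<bar>e2\<bar> < e" using dz dd by linarith
    have ae0: "\<bar>e0\<bar> < \<delta>0" using ae1 ae2 unfolding e0_def e_def by linarith
    have T0: "psi \<beta> x0 + (G \<beta> x0 + (1/\<beta>)*(ln 3 + 1)) * e0 + B0/2 * e0^2 \<le> psi \<beta> (x0+e0)"
      using d0(2) ae0 by (simp add: B0_B1_B2_def A0_A1_A2_def)
    have T1: "psi \<beta> x1 + (G \<beta> x1 + (1/\<beta>)*(ln 3 + 1)) * e1 + B1/2 * e1^2 \<le> psi \<beta> (x1+e1)"
    proof -
      have "\<bar>e1\<bar> < \<delta>1" using ae1 d0 d1 d2 unfolding e_def by linarith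
      thus ?thesis using d1(2) by (simp add: B0_B1_B2_def A0_A1_A2_def)
    qed
    have T2: "psi \<beta> x2 + (G \<beta> x2 + (1/\<beta>)*(ln 3 + 1)) * e2 + B2/2 * e2^2 \<le> psi \<beta> (x2+e2)"
    proof -
      have "\<bar>e2\<bar> < \<delta>2" using ae2 d0 d1 d2 unfolding e_def by linarith
      thus ?thesis using d2(2) by (simp add: B0_B1_B2_def A0_A1_A2_def)
    qed
    have Fz: "F \<beta> z r = 1/4 + psi \<beta> (x0+e0) + psi \<beta> (x1+e1) + psi \<beta> (x2+e2) + r*(x0+e0) - (r/2)*(x1+e1+x2+e2)"
    proof -
      have "1 - u - v = x0 + e0" using sum by (simp add: e0_def e1_e2_def)
      thus ?thesis by (simp add: z F_formula e1_e2_def)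
    qed
    have Fp: "F \<beta> (x1,x2) r = 1/4 + psi \<beta> x0 + psi \<beta> x1 + psi \<beta> x2 + r*x0 - (r/2)*(x1+x2)"
    proof -
      have "1 - x1 - x2 = x0" using sum by simp
      thus ?thesis by (simp add: F_formula)
    qed
    have lin: "(G \<beta> x0 + (1/\<beta>)*(ln 3 + 1)) * e0 + (G \<beta> x1 + (1/\<beta>)*(ln 3 + 1)) * e1
        + (G \<beta> x2 + (1/\<beta>)*(ln 3 + 1)) * e2 + r*e0 - (r/2)*(e1+e2) = 0"
    proof -
      have h0: "G \<beta> x0 = G \<beta> x1 - 3*r/2" using crit1 by simp
      have h2: "G \<beta> x2 = G \<beta> x1" using crit2 by simp
      show ?thesis unfolding h0 h2 e0_def using b by (simp add: field_simps)
    qed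
    have quad: "B0/2*e0^2 + B1/2*e1^2 + B2/2*e2^2 \<ge> 0"
    proof -
      have "B0*(e1+e2)^2 + B1*e1^2 + B2*e2^2 \<ge> 0" using quad_nonneg[OF B0 Bdet] .
      moreover have "e0^2 = (e1+e2)^2" by (simp add: e0_def power2_eq_square algebra_simps)
      ultimately show ?thesis by simp
    qed
    show "F \<beta> (x1, x2) r \<le> F \<beta> z r"
    proof -
      have "F \<beta> z r - F \<beta> (x1,x2) r = (psi \<beta> (x0+e0) - psi \<beta> x0) + (psi \<beta> (x1+e1) - psi \<beta> x1)
         + (psi \<beta> (x2+e2) - psi \<beta> x2) + r*e0 - (r/2)*(e1+e2)"
        unfolding Fz Fp by (simp add: field_simps)
      thus ?thesis using T0 T1 T2 lin quad by linarith
    qed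
  qed
qed

lemma eta_ineq:
  fixes t :: real assumes "1/2 \<le> t" "t < 1"
  shows "ln (3-2*t) - (3-2*t) < ln t - t"
proof -
  define f where "f x = ln x - x - ln (3-2*x) + (3-2*x)" for x :: real
  have "f t > f 1"
  proof (rule DERIV_neg_imp_decreasing_open[OF assms(2)])
    fix x :: real assume x: "t < x" "x < 1"
    have d: "(f has_real_derivative (1/x - 1 + 2/(3-2*x) - 2)) (at x)"
      unfolding f_def using x assms
      by (auto intro!: derivative_eq_intros simp: field_simps)
    have "1/x - 1 + 2/(3-2*x) - 2 = 3*(2*x-1)*(x-1)/(x*(3-2*x))"
      using x assms by (simp add: field_simps)
    also have "\<dots> < 0" using x assms
      by (intro divide_neg_pos mult_pos_neg) auto
    finally show "\<exists>y. (f has_real_derivative y) (at x) \<and> y < 0" using d by blast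
  next
    show "continuous_on {t..1} f" unfolding f_def using assms
      by (auto intro!: continuous_intros)
  qed
  moreover have "f 1 = 0" by (simp add: f_def)
  ultimately show ?thesis by (simp add: f_def)
qed

lemma kappa_ineq:
  fixes t :: real assumes "1/3 < t" "t \<le> 1/2"
  shows "ln (2*t/(3*t-1)) - 2*t/(3*t-1) < ln t - t"
proof -
  define f where "f x = - x + ln (3*x-1) - ln 2 + 2*x/(3*x-1)" for x :: real
  have eq: "ln t - t - (ln (2*t/(3*t-1)) - 2*t/(3*t-1)) = f t"
    using assms by (simp add: f_def ln_div ln_mult)
  have ge: "f t \<ge> f (1/2)"
  proof (cases "t = 1/2")
    case True thus ?thesis by (simp only: True order_refl)
  next
    case False
    hence lt: "t < 1/2" using assms by simp
    show ?thesis
    proof (rule less_imp_le, rule DERIV_neg_imp_decreasing_open[OF lt])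
      fix x :: real assume x: "t < x" "x < 1/2"
      have d: "(f has_real_derivative (-1 + 3/(3*x-1) + (2*(3*x-1) - 2*x*3)/(3*x-1)^2)) (at x)"
        unfolding f_def using x assms
        by (auto intro!: derivative_eq_intros simp: field_simps power2_eq_square)
      have "-1 + 3/(3*x-1) + (2*(3*x-1) - 2*x*3)/(3*x-1)^2 = -((3*x-1)-1)*((3*x-1)-2)/(3*x-1)^2"
      proof -
        have "3*x-1 > 0" using x assms by simp
        thus ?thesis by (simp add: divide_simps) (simp add: algebra_simps power2_eq_square)
      qed
      also have "\<dots> < 0" using x assms
        by (intro divide_neg_pos) (auto intro!: mult_pos_neg)
      finally show "\<exists>y. (f has_real_derivative y) (at x) \<and> y < 0" using d by blast
    next
      show "continuous_on {t..1/2} f" unfolding f_def using assms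
        by (auto intro!: continuous_intros)
    qed
  qed
  have l2: "ln 2 < (3/4::real)"
  proof -
    have "1 + 3/4 + (3/4)^2/2 \<le> exp (3/4::real)"
      by (rule exp_lower_Taylor_quadratic) simp
    hence "2 < exp (3/4::real)" by (simp add: power2_eq_square)
    thus ?thesis by (metis ln_exp ln_less_cancel_iff exp_gt_zero zero_less_numeral)
  qed
  have "f (1/2) = 3/2 - 2 * ln 2"
    by (simp add: f_def ln_div)
  hence "f (1/2) > 0" using l2 by simp
  thus ?thesis using eq ge by linarith
qed

lemma core2:
  fixes t1 t2 :: real
  assumes t: "0 < t1" "t1 < 1" "1 < t2" and L: "ln t1 - t1 = ln t2 - t2" and s: "3 \<le> 2*t1 + t2"
  shows "2*t1/(1-t1) < t2/(t2-1)"
proof -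
  have h: "t1 < 1/2"
  proof (rule ccontr)
    assume "\<not> t1 < 1/2"
    hence a: "1/2 \<le> t1" by simp
    have "ln (3-2*t1) - (3-2*t1) < ln t1 - t1" using eta_ineq[OF a t(2)] .
    moreover have "3 - 2*t1 \<le> t2" using s by simp
    moreover have "1 \<le> 3 - 2*t1" using t by simp
    ultimately show False using L L_dec[of "3-2*t1" t2] by (cases "3 - 2*t1 = t2") auto
  qed
  have key: "t2*(3*t1-1) < 2*t1"
  proof (cases "t1 \<le> 1/3")
    case True
    have "t2*(3*t1-1) \<le> 0" using True t by (intro mult_nonneg_nonpos) auto
    thus ?thesis using t by simp
  next
    case False
    hence a: "1/3 < t1" by simp
    have p: "3*t1 - 1 > 0" using a by simp
    define w where "w = 2*t1/(3*t1-1)"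
    have "ln w - w < ln t1 - t1" unfolding w_def using kappa_ineq[OF a] h by simp
    moreover have w1: "1 \<le> w" unfolding w_def using p t by (simp add: le_divide_eq)
    ultimately have "t2 < w" using L L_dec[of w t2] by (cases "w = t2"; cases "w < t2") auto
    thus ?thesis unfolding w_def using p by (simp add: less_divide_eq)
  qed
  have "2*t1*(t2-1) < t2*(1-t1)" using key by (simp add: algebra_simps)
  thus ?thesis using t by (simp add: divide_simps)
qed

lemma core3:
  fixes t0 t1 t2 :: real
  assumes "t0 \<le> t1" "0 < t1" "t1 < 1" "1 < t2" "ln t1 - t1 = ln t2 - t2" "3 \<le> t0 + t1 + t2"
  shows "t0/(1-t0) + t1/(1-t1) + t2/(1-t2) < 0"
proof -
  have a: "t0/(1-t0) \<le> t1/(1-t1)" using assms by (simp add: divide_simps) (simp add: algebra_simps)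
  have b: "2*t1/(1-t1) < t2/(t2-1)" using core2[OF assms(2-5)] assms by simp
  have c: "t2/(1-t2) = -(t2/(t2-1))"
  proof -
    have "1 - t2 = -(t2-1)" by simp
    thus ?thesis by (simp only: divide_minus_right)
  qed
  have d: "2*t1/(1-t1) = t1/(1-t1) + t1/(1-t1)" by simp
  show ?thesis using a b c d by linarith
qed

lemma inv_dG:
  assumes "\<beta> > 0" "x > 0" "3*\<beta>*x \<noteq> 2"
  shows "1 / dG \<beta> x = (2/3) * ((3*\<beta>*x/2) / (1 - 3*\<beta>*x/2))"
proof -
  have "2 - 3*\<beta>*x \<noteq> 0" using assms by simp
  thus ?thesis using assms unfolding dG_def by (simp add: field_simps)
qed

lemma sum_neg:
  assumes b: "\<beta> > 0" and x: "0 < x0" "x0 \<le> x1" "x1 < l \<beta>" "l \<beta> < x2"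
    and GG: "G \<beta> x1 = G \<beta> x2" and s: "x0 + x1 + x2 \<ge> 2/\<beta>"
  shows "1/dG \<beta> x0 + 1/dG \<beta> x1 + 1/dG \<beta> x2 < 0"
proof -
  define t0 t1 t2 where "t0 = 3*\<beta>*x0/2" "t1 = 3*\<beta>*x1/2" "t2 = 3*\<beta>*x2/2"
  have x1p: "x1 > 0" "x2 > 0" using x l_pos[OF b] by linarith+
  have tt: "t0 \<le> t1" using x b by (simp add: t0_t1_t2_def)
  have t1p: "0 < t1" using x1p b by (simp add: t0_t1_t2_def)
  have t1l: "t1 < 1" using x b by (simp add: t0_t1_t2_def l_def field_simps)
  have t0l: "t0 < 1" using tt t1l by simp
  have t2g: "1 < t2" using x b by (simp add: t0_t1_t2_def l_def field_simps)
  have st: "3 \<le> t0 + t1 + t2"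
  proof -
    have "3*\<beta>/2 * (x0+x1+x2) \<ge> 3*\<beta>/2 * (2/\<beta>)" using s b by (intro mult_left_mono) auto
    thus ?thesis using b by (simp add: t0_t1_t2_def algebra_simps)
  qed
  have LL: "ln t1 - t1 = ln t2 - t2"
  proof -
    have "\<beta> * G \<beta> x1 = \<beta> * G \<beta> x2" using GG by simp
    hence "ln x1 - t1 = ln x2 - t2" using b unfolding G_def t0_t1_t2_def by (simp add: algebra_simps)
    moreover have "ln t1 = ln (3*\<beta>/2) + ln x1" "ln t2 = ln (3*\<beta>/2) + ln x2"
    proof -
      have q1: "t1 = (3*\<beta>/2)*x1" and q2: "t2 = (3*\<beta>/2)*x2" by (simp_all add: t0_t1_t2_def)
      show "ln t1 = ln (3*\<beta>/2) + ln x1" unfolding q1 using b x1p by (subst ln_mult) auto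
      show "ln t2 = ln (3*\<beta>/2) + ln x2" unfolding q2 using b x1p by (subst ln_mult) auto
    qed
    ultimately show ?thesis by linarith
  qed
  have e0: "1/dG \<beta> x0 = (2/3) * (t0/(1-t0))" using inv_dG[OF b x(1)] t0l unfolding t0_t1_t2_def by auto
  have e1: "1/dG \<beta> x1 = (2/3) * (t1/(1-t1))" using inv_dG[OF b x1p(1)] t1l unfolding t0_t1_t2_def by auto
  have e2: "1/dG \<beta> x2 = (2/3) * (t2/(1-t2))" using inv_dG[OF b x1p(2)] t2g unfolding t0_t1_t2_def by auto
  have "t0/(1-t0) + t1/(1-t1) + t2/(1-t2) < 0" using core3[OF tt t1p t1l t2g LL st] .
  thus ?thesis unfolding e0 e1 e2 by linarith
qed

lemma H_isCont: assumes b: "\<beta> > 0" and y: "y < g \<beta>" shows "isCont (H \<beta>) y"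
proof -
  have hs: "0 < H \<beta> y" "H \<beta> y < l \<beta>" "G \<beta> (H \<beta> y) = y"
    using H_spec[OF b, of y] H_lt[OF b y] y by auto
  have "isCont (H \<beta>) (G \<beta> (H \<beta> y))"
  proof (rule isCont_inverse_function2[of "H \<beta> y / 2" "H \<beta> y" "l \<beta>"])
    fix z assume "H \<beta> y / 2 \<le> z" "z \<le> l \<beta>"
    moreover hence "z > 0" using hs by linarith
    ultimately show "H \<beta> (G \<beta> z) = z" "isCont (G \<beta>) z" using H_eq[OF b] G_isCont[OF b] by auto
  qed (use hs in auto)
  thus ?thesis using hs by simp
qed

lemma K_isCont: assumes b: "\<beta> > 2" and y: "y < g \<beta>" shows "isCont (K \<beta>) y"
proof -
  have b0: "\<beta> > 0" using b by simp
  have ks: "l \<beta> < K \<beta> y" "G \<beta> (K \<beta> y) = y"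
    using K_spec[OF b, of y] K_gt[OF b y] y by auto
  have "isCont (K \<beta>) (G \<beta> (K \<beta> y))"
  proof (rule isCont_inverse_function2[of "l \<beta>" "K \<beta> y" "2 * K \<beta> y"])
    fix z assume "l \<beta> \<le> z" "z \<le> 2 * K \<beta> y"
    moreover hence "z > 0" using l_pos[OF b0] by linarith
    ultimately show "K \<beta> (G \<beta> z) = z" "isCont (G \<beta>) z" using K_eq[OF b0] G_isCont[OF b0] by auto
  qed (use ks l_pos[OF b0] in auto)
  thus ?thesis using ks by simp
qed

lemma H_deriv: assumes b: "\<beta> > 0" and y: "y < g \<beta>"
  shows "(H \<beta> has_real_derivative 1 / dG \<beta> (H \<beta> y)) (at y)"
proof -
  have hs: "0 < H \<beta> y" "H \<beta> y < l \<beta>"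
    using H_spec[OF b, of y] H_lt[OF b y] y by auto
  have "(H \<beta> has_real_derivative inverse (dG \<beta> (H \<beta> y))) (at y)"
  proof (rule DERIV_inverse_function[where f="G \<beta>" and g="H \<beta>" and x=y and a="y - 1" and b="g \<beta>"])
    show "(G \<beta> has_real_derivative dG \<beta> (H \<beta> y)) (at (H \<beta> y))" using G_deriv[OF b hs(1)] .
    show "dG \<beta> (H \<beta> y) \<noteq> 0" using dG_pos[OF b hs] by simp
    show "\<And>z. y - 1 < z \<Longrightarrow> z < g \<beta> \<Longrightarrow> G \<beta> (H \<beta> z) = z" using H_spec[OF b] by auto
    show "isCont (H \<beta>) y" using H_isCont[OF b y] .
  qed (use y in auto)
  thus ?thesis by (simp add: inverse_eq_divide)
qed

lemma K_deriv: assumes b: "\<beta> > 2" and y: "y < g \<beta>"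
  shows "(K \<beta> has_real_derivative 1 / dG \<beta> (K \<beta> y)) (at y)"
proof -
  have b0: "\<beta> > 0" using b by simp
  have ks: "l \<beta> < K \<beta> y" using K_gt[OF b y] .
  have kp: "K \<beta> y > 0" using ks l_pos[OF b0] by linarith
  have "(K \<beta> has_real_derivative inverse (dG \<beta> (K \<beta> y))) (at y)"
  proof (rule DERIV_inverse_function[where f="G \<beta>" and g="K \<beta>" and x=y and a="y - 1" and b="g \<beta>"])
    show "(G \<beta> has_real_derivative dG \<beta> (K \<beta> y)) (at (K \<beta> y))" using G_deriv[OF b0 kp] .
    show "dG \<beta> (K \<beta> y) \<noteq> 0" using dG_neg[OF b0 ks] by simp
    show "\<And>z. y - 1 < z \<Longrightarrow> z < g \<beta> \<Longrightarrow> G \<beta> (K \<beta> z) = z" using K_spec[OF b] by auto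
    show "isCont (K \<beta>) y" using K_isCont[OF b y] .
  qed (use y in auto)
  thus ?thesis by (simp add: inverse_eq_divide)
qed

lemma H_strict_mono: assumes b: "\<beta> > 0" and "y' < y" "y \<le> g \<beta>" shows "H \<beta> y' < H \<beta> y"
proof (rule ccontr)
  assume "\<not> H \<beta> y' < H \<beta> y"
  hence le: "H \<beta> y \<le> H \<beta> y'" by simp
  have s1: "0 < H \<beta> y" "H \<beta> y \<le> l \<beta>" "G \<beta> (H \<beta> y) = y" using H_spec[OF b assms(3)] by auto
  have s2: "0 < H \<beta> y'" "H \<beta> y' \<le> l \<beta>" "G \<beta> (H \<beta> y') = y'" using H_spec[OF b, of y'] assms by auto
  show False
  proof (cases "H \<beta> y = H \<beta> y'")
    case True
    hence "G \<beta> (H \<beta> y) = G \<beta> (H \<beta> y')" by simp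
    hence "y = y'" using s1(3) s2(3) by simp
    thus False using assms by simp
  next
    case False
    hence "G \<beta> (H \<beta> y) < G \<beta> (H \<beta> y')" using G_mono[OF b s1(1) _ s2(2)] le by simp
    thus False using s1 s2 assms by simp
  qed
qed

lemma no_two_generic:
  fixes \<phi> \<phi>' :: "real \<Rightarrow> real"
  assumes y12: "y1 < y2"
    and der: "\<And>y. y1 \<le> y \<Longrightarrow> y \<le> y2 \<Longrightarrow> (\<phi> has_real_derivative \<phi>' y) (at y)"
    and neg: "\<And>y. y1 \<le> y \<Longrightarrow> y \<le> y2 \<Longrightarrow> \<phi> y > k \<Longrightarrow> \<phi>' y < 0"
    and k: "k < 1" and p1: "\<phi> y1 = 1" and p2: "\<phi> y2 = 1"
  shows False
proof -
  define S where "S = {y. y1 \<le> y \<and> y \<le> y2 \<and> \<phi> y \<le> k}"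
  obtain z where z: "y1 \<le> z" "z < y2" "\<phi> z \<le> 1" "\<And>w. z < w \<Longrightarrow> w \<le> y2 \<Longrightarrow> \<phi> w > k"
  proof (cases "S = {}")
    case True
    show ?thesis
    proof (rule that[of y1])
      fix w assume "y1 < w" "w \<le> y2"
      thus "\<phi> w > k" using True unfolding S_def by force
    qed (use y12 p1 in auto)
  next
    case False
    have bdd: "bdd_above S" unfolding S_def by (rule bdd_aboveI[of _ y2]) auto
    define z where "z = Sup S"
    have up: "s \<le> z" if "s \<in> S" for s using cSup_upper[OF that bdd] z_def by simp
    have zle: "z \<le> y2" unfolding z_def using False by (intro cSup_least) (auto simp: S_def)
    obtain s0 where s0: "s0 \<in> S" using False by blast
    have zge: "y1 \<le> z" using up[OF s0] s0 by (auto simp: S_def)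
    have after: "\<phi> w > k" if "z < w" "w \<le> y2" for w
    proof (rule ccontr)
      assume "\<not> \<phi> w > k"
      hence "w \<in> S" using that zge by (auto simp: S_def)
      thus False using up that by force
    qed
    have pz: "\<phi> z \<le> k"
    proof (rule ccontr)
      assume "\<not> \<phi> z \<le> k"
      hence gt: "k < \<phi> z" by simp
      have "isCont \<phi> z" using der[OF zge zle] DERIV_isCont by blast
      hence "(\<phi> \<longlongrightarrow> \<phi> z) (at z)" by (simp add: isCont_def)
      hence "eventually (\<lambda>x. k < \<phi> x) (at z)" using gt by (rule order_tendstoD(1))
      then obtain d where d: "d > 0" "\<And>x. x \<noteq> z \<Longrightarrow> dist x z < d \<Longrightarrow> k < \<phi> x"
        unfolding eventually_at by auto
      obtain s where s: "s \<in> S" "z - d < s" using less_cSupD[OF False, of "z - d"] d z_def by auto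
      have "s \<le> z" using up s by simp
      show False
      proof (cases "s = z")
        case True thus False using s gt by (simp add: S_def)
      next
        case False
        hence "k < \<phi> s" using d(2)[of s] s \<open>s \<le> z\<close> by (simp add: dist_real_def)
        thus False using s by (simp add: S_def)
      qed
    qed
    have "z \<noteq> y2" using pz p2 k by auto
    show ?thesis by (rule that[of z]) (use zge zle pz k after \<open>z \<noteq> y2\<close> in auto)
  qed
  obtain \<xi> where xi: "z < \<xi>" "\<xi> < y2" "\<phi> y2 - \<phi> z = (y2 - z) * \<phi>' \<xi>"
    using MVT2[OF z(2), of \<phi> \<phi>'] der z by auto
  have "\<phi>' \<xi> < 0" using neg[of \<xi>] z(4)[of \<xi>] xi z by auto
  hence "(y2 - z) * \<phi>' \<xi> < 0" using xi by (simp add: mult_pos_neg)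
  thus False using xi z p2 by linarith
qed


lemma det_pos:
  fixes a0 a1 a2 :: real
  assumes "a0 > 0" "a1 > 0" "a2 < 0" "1/a0 + 1/a1 + 1/a2 < 0"
  shows "a0*a1 + a0*a2 + a1*a2 > 0"
proof -
  have e: "(1/a0 + 1/a1 + 1/a2) * (a0*a1*a2) = a1*a2 + a0*a2 + a0*a1"
    using assms by (simp add: field_simps)
  have "a0*a1*a2 < 0" using assms by (intro mult_pos_neg mult_pos_pos) auto
  hence "(1/a0 + 1/a1 + 1/a2) * (a0*a1*a2) > 0" using assms(4) by (intro mult_neg_neg)
  thus ?thesis using e by linarith
qed

theorem lemma5p8:
  fixes \<beta> r :: real
  assumes "\<beta> > 2" and "r > 0"
  shows "(\<exists>!y. y \<le> g \<beta> \<and> H \<beta> (y - 3 * r / 2) + H \<beta> y + K \<beta> y = 1)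
       \<and> (\<forall>y. y \<le> g \<beta> \<and> H \<beta> (y - 3 * r / 2) + H \<beta> y + K \<beta> y = 1
              \<longrightarrow> is_local_min_on (\<lambda>x. F \<beta> x r) Xi (H \<beta> y, K \<beta> y))"
proof -
  have b0: "\<beta> > 0" using assms by simp
  define \<phi> where "\<phi> y = H \<beta> (y - 3 * r / 2) + H \<beta> y + K \<beta> y" for y
  define \<phi>' where "\<phi>' y = 1/dG \<beta> (H \<beta> (y - 3 * r / 2)) + 1/dG \<beta> (H \<beta> y) + 1/dG \<beta> (K \<beta> y)" for y
  have lp: "l \<beta> > 0" using l_pos[OF b0] .
  have l3: "l \<beta> < 1/3" using assms unfolding l_def by (simp add: field_simps)
  have lb: "3 * l \<beta> = 2/\<beta>" unfolding l_def by simp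
  have k1: "2/\<beta> < 1" using assms by simp
  have der: "(\<phi> has_real_derivative \<phi>' y) (at y)" if y: "y < g \<beta>" for y
  proof -
    have y': "y - 3*r/2 < g \<beta>" using y assms by simp
    have d0: "((\<lambda>y. y - 3*r/2) has_real_derivative 1) (at y)" by (auto intro!: derivative_eq_intros)
    have d1: "((\<lambda>y. H \<beta> (y - 3*r/2)) has_real_derivative 1/dG \<beta> (H \<beta> (y - 3*r/2)) * 1) (at y)"
      by (rule DERIV_chain2[OF H_deriv[OF b0 y'] d0])
    have d2: "(H \<beta> has_real_derivative 1/dG \<beta> (H \<beta> y)) (at y)" using H_deriv[OF b0 y] .
    have d3: "(K \<beta> has_real_derivative 1/dG \<beta> (K \<beta> y)) (at y)" using K_deriv[OF assms(1) y] .
    show ?thesis unfolding \<phi>_def[abs_def] \<phi>'_def using DERIV_add[OF DERIV_add[OF d1 d2] d3] by simp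
  qed
  have neg: "\<phi>' y < 0" if y: "y < g \<beta>" and p: "\<phi> y \<ge> 2/\<beta>" for y
  proof -
    have y': "y - 3*r/2 < g \<beta>" using y assms by simp
    have h0: "0 < H \<beta> (y - 3*r/2)" using H_spec[OF b0] y' by auto
    have h01: "H \<beta> (y - 3*r/2) \<le> H \<beta> y" using H_strict_mono[OF b0 _ less_imp_le[OF y], of "y - 3*r/2"] assms by simp
    have h1: "H \<beta> y < l \<beta>" using H_lt[OF b0 y] .
    have k2: "l \<beta> < K \<beta> y" using K_gt[OF assms(1) y] .
    have GG: "G \<beta> (H \<beta> y) = G \<beta> (K \<beta> y)" using H_spec[OF b0] K_spec[OF assms(1)] y by auto
    show ?thesis unfolding \<phi>'_def using sum_neg[OF b0 h0 h01 h1 k2 GG] p by (simp add: \<phi>_def)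
  qed
  have Hg: "H \<beta> (g \<beta>) = l \<beta>" unfolding g_def using H_eq[OF b0 lp] by simp
  have Kg: "K \<beta> (g \<beta>) = l \<beta>" unfolding g_def using K_eq[OF b0] by simp
  have phig: "\<phi> (g \<beta>) < 1"
  proof -
    have "H \<beta> (g \<beta> - 3*r/2) < l \<beta>" using H_lt[OF b0] assms by simp
    thus ?thesis unfolding \<phi>_def using Hg Kg lb k1 by simp
  qed
  have sol_lt: "y < g \<beta>" if "y \<le> g \<beta>" "\<phi> y = 1" for y
    using that phig by (cases "y = g \<beta>") auto
  have cont: "continuous_on {a..b} \<phi>" if "b < g \<beta>" for a b
    using that by (intro continuous_at_imp_continuous_on ballI DERIV_isCont[OF der]) auto
  have ex: "\<exists>y. y \<le> g \<beta> \<and> \<phi> y = 1"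
  proof -
    define s where "s = 1/2 - l \<beta>/2"
    have s: "l \<beta> < s" "s < 1" using l3 lp by (simp_all add: s_def)
    have ab: "G \<beta> 1 < G \<beta> s" using G_anti[OF b0 _ s(2)] s by simp
    have bg: "G \<beta> s < g \<beta>" using G_anti[OF b0 order_refl s(1)] by (simp add: g_def)
    have pa: "1 \<le> \<phi> (G \<beta> 1)"
    proof -
      have "K \<beta> (G \<beta> 1) = 1" using K_eq[OF b0] l3 by simp
      moreover have "0 < H \<beta> (G \<beta> 1 - 3*r/2)" "0 < H \<beta> (G \<beta> 1)"
        using H_spec[OF b0] ab bg assms by auto
      ultimately show ?thesis unfolding \<phi>_def by simp
    qed
    have pb: "\<phi> (G \<beta> s) \<le> 1"
    proof -
      have "K \<beta> (G \<beta> s) = s" using K_eq[OF b0] s by simp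
      moreover have "H \<beta> (G \<beta> s - 3*r/2) \<le> l \<beta>" "H \<beta> (G \<beta> s) \<le> l \<beta>"
        using H_spec[OF b0] bg assms by auto
      ultimately show ?thesis unfolding \<phi>_def using l3 by (simp add: s_def)
    qed
    obtain y where "G \<beta> 1 \<le> y" "y \<le> G \<beta> s" "\<phi> y = 1"
      using IVT2'[of \<phi> "G \<beta> s" 1 "G \<beta> 1"] pa pb ab cont[OF bg] by auto
    thus ?thesis using bg by (intro exI[of _ y]) auto
  qed
  have uniq: "y1 = y2" if "y1 \<le> g \<beta> \<and> \<phi> y1 = 1" "y2 \<le> g \<beta> \<and> \<phi> y2 = 1" for y1 y2
  proof -
    have nt: False if "u < v" "u \<le> g \<beta> \<and> \<phi> u = 1" "v \<le> g \<beta> \<and> \<phi> v = 1" for u v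
    proof -
      have vg: "v < g \<beta>" using sol_lt that by blast
      show False
      proof (rule no_two_generic[of u v \<phi> \<phi>' "2/\<beta>"])
        show "u < v" by fact
        show "\<And>y. u \<le> y \<Longrightarrow> y \<le> v \<Longrightarrow> (\<phi> has_real_derivative \<phi>' y) (at y)"
          using der vg by auto
        show "\<And>y. u \<le> y \<Longrightarrow> y \<le> v \<Longrightarrow> 2/\<beta> < \<phi> y \<Longrightarrow> \<phi>' y < 0"
          using neg vg by auto
      qed (use that k1 in auto)
    qed
    show ?thesis using nt[of y1 y2] nt[of y2 y1] that by (cases y1 y2 rule: linorder_cases) auto
  qed
  have part1: "\<exists>!y. y \<le> g \<beta> \<and> \<phi> y = 1"
    by (rule ex_ex1I[OF ex]) (use uniq in blast)
  have part2: "is_local_min_on (\<lambda>x. F \<beta> x r) Xi (H \<beta> y, K \<beta> y)" if sy: "y \<le> g \<beta>" "\<phi> y = 1" for y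
  proof -
    have y: "y < g \<beta>" using sol_lt sy by blast
    have y': "y - 3*r/2 < g \<beta>" using y assms by simp
    have h0: "0 < H \<beta> (y - 3*r/2)" "H \<beta> (y - 3*r/2) < l \<beta>" "G \<beta> (H \<beta> (y - 3*r/2)) = y - 3*r/2"
      using H_spec[OF b0] H_lt[OF b0 y'] y' by auto
    have h1: "0 < H \<beta> y" "H \<beta> y < l \<beta>" "G \<beta> (H \<beta> y) = y"
      using H_spec[OF b0] H_lt[OF b0 y] y by auto
    have k2: "l \<beta> < K \<beta> y" "G \<beta> (K \<beta> y) = y" using K_gt[OF assms(1) y] K_spec[OF assms(1)] y by auto
    have k2p: "0 < K \<beta> y" using k2 lp by linarith
    have a2: "dG \<beta> (K \<beta> y) < 0" using dG_neg[OF b0 k2(1)] .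
    have a0: "dG \<beta> (H \<beta> (y - 3*r/2)) > 0" using dG_pos[OF b0 h0(1,2)] .
    have a1: "dG \<beta> (H \<beta> y) > 0" using dG_pos[OF b0 h1(1,2)] .
    have "\<phi>' y < 0" using neg[OF y] sy k1 by simp
    hence det: "dG \<beta> (H \<beta> (y - 3*r/2)) * dG \<beta> (H \<beta> y) + dG \<beta> (H \<beta> (y - 3*r/2)) * dG \<beta> (K \<beta> y)
       + dG \<beta> (H \<beta> y) * dG \<beta> (K \<beta> y) > 0"
      unfolding \<phi>'_def by (intro det_pos a0 a1 a2)
    show ?thesis
    proof (rule local_min_generic[OF b0 h0(1) h1(1) k2p])
      show "H \<beta> (y - 3*r/2) + H \<beta> y + K \<beta> y = 1" using sy by (simp add: \<phi>_def)
      show "G \<beta> (H \<beta> (y - 3*r/2)) + r = G \<beta> (H \<beta> y) - r/2" using h0 h1 by simp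
      show "G \<beta> (H \<beta> y) = G \<beta> (K \<beta> y)" using h1 k2 by simp
    qed (use a0 a1 det in auto)
  qed
  show ?thesis using part1 part2 unfolding \<phi>_def by blast
qed

end
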